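(* Let $(\mathcal{H}, p_0, \mathcal{Z}, T, \mathcal{Y}, O)$ be a learning POMDP, let $h^* \in \mathcal{H}$ be a target hypothesis, let $0<\lambda\le 1$ be a teaching performance and let $t^*\in\mathbb{N}_{\ge 1}$ be a pre-set number of trials. Suppose there exist polynomials $B_z\in\mathcal{R}[t,b]$, $z\in\mathcal{Z}$, of degree $d$, sum-of-squares polynomials $p^f_z\in\Sigma[b]$, $z\in\mathcal{Z}$, and constants $s^1_z,s^2_z>0$, $z\in\mathcal{Z}$, such that for every $z\in\mathcal{Z}$: (i) $B_z(t^*,b)+p^f_z(b)\big(b(h^* )-\lambda\big)-s^1_z\in\Sigma[b]$; (ii) $-B_z(0,p_0)-s^2_z>0$; (iii) for all $t\in\{1,\dots,t^*\}$ and $y\in\mathcal{Y}$: $$-R_z(b,y)^d\Big(B_z\Big(t,\tfrac{S_z(b,y)}{R_z(b,y)}\Big)-B_z(t-1,b)\Big)\in\Sigma[t,b].$$ Then there exists no solution of the belief dynamics $b_t=f_{z}(b_{t-1},y_t)$ (with arbitrary examples $z\in\mathcal{Z}$ and observations $y_t\in\mathcal{Y}$) with $b_0=p_0$ and $b_{t^*}\in\mathcal{B}_f$, where $\mathcal{B}_f=\{b\in\mathcal{B}: b(h^* )<\lambda\}$; hence the teaching performance is satisfied.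
   Context: A learning POMDP is a tuple $(\mathcal{H}, p_0, \mathcal{Z}, T, \mathcal{Y}, O)$ where $\mathcal{H}$ is a finite set of hypotheses, $\mathcal{Z}$ a finite set of examples (actions), $\mathcal{Y}$ a finite set of observations, $p_0$ an initial distribution on $\mathcal{H}$, $T(h,z,h')\in[0,1]$ transition probabilities and $O(y\mid h',z)\in[0,1]$ observation probabilities. $\mathcal{B}$ is the unit simplex of beliefs on $\mathcal{H}$; $b=(b(h))_{h\in\mathcal{H}}$ are treated as real variables. The belief update $f_z(b,y)$ is the rational map with components $f_z^{h'}(b,y)=S_z^{h'}(b,y)/R_z(b,y)$, where $S_z^{h'}(b,y)=O(y\mid h',z)\sum_{h\in\mathcal{H}}T(h,z,h')b(h)$ and $R_z(b,y)=\sum_{h''\in\mathcal{H}}O(y\mid h'',z)\sum_{h\in\mathcal{H}}T(h,z,h'')b(h)$; $S_z/R_z$ denotes the vector with these components. $\mathcal{R}[x]$ denotes real polynomials in the variables $x$, and $\Sigma[x]\subset\mathcal{R}[x]$ the polynomials that are sums of squares of polynomials. *)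

theory Defs
  imports Complex_Main
begin

text \<open>Real multivariate polynomial functions over a variable type 'v, with a total-degree bound.
  (Over the infinite field of reals, polynomial functions and polynomials correspond bijectively.)\<close>
inductive mpoly_deg :: "nat \<Rightarrow> (('v \<Rightarrow> real) \<Rightarrow> real) \<Rightarrow> bool" where
  const: "mpoly_deg n (\<lambda>x. c)"
| var: "1 \<le> n \<Longrightarrow> mpoly_deg n (\<lambda>x. x v)"
| add: "mpoly_deg n f \<Longrightarrow> mpoly_deg n g \<Longrightarrow> mpoly_deg n (\<lambda>x. f x + g x)"
| mult: "mpoly_deg m f \<Longrightarrow> mpoly_deg k g \<Longrightarrow> mpoly_deg (m + k) (\<lambda>x. f x * g x)"
| mono: "mpoly_deg m f \<Longrightarrow> m \<le> n \<Longrightarrow> mpoly_deg n f"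

definition is_mpoly :: "(('v \<Rightarrow> real) \<Rightarrow> real) \<Rightarrow> bool" where
  "is_mpoly f \<longleftrightarrow> (\<exists>n. mpoly_deg n f)"

definition mpoly_degree :: "(('v \<Rightarrow> real) \<Rightarrow> real) \<Rightarrow> nat" where
  "mpoly_degree f = (LEAST n. mpoly_deg n f)"

definition sos :: "(('v \<Rightarrow> real) \<Rightarrow> real) \<Rightarrow> bool" where
  "sos f \<longleftrightarrow> (\<exists>gs. (\<forall>g\<in>set gs. is_mpoly g) \<and> f = (\<lambda>x. \<Sum>g\<leftarrow>gs. (g x)\<^sup>2))"

text \<open>Polynomials in (t, b): the variable None stands for t, Some h for b(h).\<close>
definition tb_fun :: "(real \<Rightarrow> ('h \<Rightarrow> real) \<Rightarrow> real) \<Rightarrow> (('h option \<Rightarrow> real) \<Rightarrow> real)" where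
  "tb_fun B = (\<lambda>x. B (x None) (\<lambda>h. x (Some h)))"

definition simplex :: "('h::finite \<Rightarrow> real) set" where
  "simplex = {b. (\<forall>h. 0 \<le> b h) \<and> (\<Sum>h\<in>UNIV. b h) = 1}"

definition Bf :: "'h::finite \<Rightarrow> real \<Rightarrow> ('h \<Rightarrow> real) set" where
  "Bf hstar lam = {b \<in> simplex. b hstar < lam}"

text \<open>Belief update. T h z h' = T(h,z,h'), Ob y h' z = O(y | h', z).\<close>
definition Supd :: "('h::finite \<Rightarrow> 'z \<Rightarrow> 'h \<Rightarrow> real) \<Rightarrow> ('y \<Rightarrow> 'h \<Rightarrow> 'z \<Rightarrow> real)
    \<Rightarrow> 'z \<Rightarrow> ('h \<Rightarrow> real) \<Rightarrow> 'y \<Rightarrow> 'h \<Rightarrow> real" where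
  "Supd T Ob z b y h' = Ob y h' z * (\<Sum>h\<in>UNIV. T h z h' * b h)"

definition Rupd :: "('h::finite \<Rightarrow> 'z \<Rightarrow> 'h \<Rightarrow> real) \<Rightarrow> ('y \<Rightarrow> 'h \<Rightarrow> 'z \<Rightarrow> real)
    \<Rightarrow> 'z \<Rightarrow> ('h \<Rightarrow> real) \<Rightarrow> 'y \<Rightarrow> real" where
  "Rupd T Ob z b y = (\<Sum>h''\<in>UNIV. Supd T Ob z b y h'')"

definition fupd :: "('h::finite \<Rightarrow> 'z \<Rightarrow> 'h \<Rightarrow> real) \<Rightarrow> ('y \<Rightarrow> 'h \<Rightarrow> 'z \<Rightarrow> real)
    \<Rightarrow> 'z \<Rightarrow> ('h \<Rightarrow> real) \<Rightarrow> 'y \<Rightarrow> ('h \<Rightarrow> real)" where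
  "fupd T Ob z b y = (\<lambda>h'. Supd T Ob z b y h' / Rupd T Ob z b y)"

end

theory Submission
  imports Defs
begin

lemma sos_nonneg: "sos f \<Longrightarrow> 0 \<le> f x"
  unfolding sos_def by (auto intro!: sum_list_nonneg)

theorem corollary2:
  fixes T :: "'h::finite \<Rightarrow> 'z::finite \<Rightarrow> 'h \<Rightarrow> real"
    and Ob :: "'y::finite \<Rightarrow> 'h \<Rightarrow> 'z \<Rightarrow> real"
    and p0 :: "'h \<Rightarrow> real" and hstar :: 'h and lam :: real
    and tstar :: nat and d :: nat
    and B :: "'z \<Rightarrow> real \<Rightarrow> ('h \<Rightarrow> real) \<Rightarrow> real"
    and pf :: "'z \<Rightarrow> ('h \<Rightarrow> real) \<Rightarrow> real"
    and s1 s2 :: "'z \<Rightarrow> real"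
  assumes p0: "p0 \<in> simplex"
    and T_range: "\<forall>h z h'. 0 \<le> T h z h' \<and> T h z h' \<le> 1"
    and O_range: "\<forall>y h' z. 0 \<le> Ob y h' z \<and> Ob y h' z \<le> 1"
    and lam: "0 < lam" "lam \<le> 1"
    and tstar: "1 \<le> tstar"
    and B_poly: "\<forall>z. is_mpoly (tb_fun (B z)) \<and> mpoly_degree (tb_fun (B z)) = d"
    and pf_sos: "\<forall>z. sos (pf z)"
    and s_pos: "\<forall>z. 0 < s1 z \<and> 0 < s2 z"
    and cond_i: "\<forall>z. sos (\<lambda>b. B z (real tstar) b + pf z b * (b hstar - lam) - s1 z)"
    and cond_ii: "\<forall>z. - B z 0 p0 - s2 z > 0"
    and cond_iii: "\<forall>z. \<forall>t\<in>{1..tstar}. \<forall>y.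
        \<exists>q. sos q \<and>
          (\<forall>x. Rupd T Ob z (\<lambda>h. x (Some h)) y \<noteq> 0 \<longrightarrow>
             q x = - ((Rupd T Ob z (\<lambda>h. x (Some h)) y) ^ d *
                   (B z (x None) (fupd T Ob z (\<lambda>h. x (Some h)) y)
                    - B z (x None - 1) (\<lambda>h. x (Some h)))))"
  shows "\<forall>z. \<not> (\<exists>bs ys. bs 0 = p0 \<and>
            (\<forall>t\<in>{1..tstar}. bs t = fupd T Ob z (bs (t - 1)) (ys t)) \<and>
            bs tstar \<in> Bf hstar lam)"
proof (intro allI notI)
  fix z
  assume "\<exists>bs ys. bs 0 = p0 \<and>
            (\<forall>t\<in>{1..tstar}. bs t = fupd T Ob z (bs (t - 1)) (ys t)) \<and>
            bs tstar \<in> Bf hstar lam"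
  then obtain bs ys where b0: "bs 0 = p0"
    and rec: "\<forall>t\<in>{1..tstar}. bs t = fupd T Ob z (bs (t - 1)) (ys t)"
    and fin: "bs tstar \<in> Bf hstar lam" by blast
  have S_nn: "0 \<le> Supd T Ob z b y h" if "\<forall>h. 0 \<le> b h" for b y h
    unfolding Supd_def using T_range O_range that
    by (intro mult_nonneg_nonneg sum_nonneg) auto
  have R_nn: "0 \<le> Rupd T Ob z b y" if "\<forall>h. 0 \<le> b h" for b y
    unfolding Rupd_def using S_nn[OF that] by (intro sum_nonneg) auto
  have main: "t \<le> tstar \<Longrightarrow> (\<forall>h. 0 \<le> bs t h) \<and> (bs t = (\<lambda>_. 0) \<or> B z (real t) (bs t) \<le> B z 0 p0)" for t
  proof (induction t)
    case 0
    then show ?case using p0 b0 unfolding simplex_def by auto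
  next
    case (Suc t)
    then have IH: "(\<forall>h. 0 \<le> bs t h)" "bs t = (\<lambda>_. 0) \<or> B z (real t) (bs t) \<le> B z 0 p0" by auto
    define b where "b = bs t"
    define y where "y = ys (Suc t)"
    have bs_eq: "bs (Suc t) = fupd T Ob z b y"
      using rec Suc.prems unfolding b_def y_def by auto
    have bnn: "\<forall>h. 0 \<le> b h" using IH b_def by auto
    show ?case
    proof (cases "Rupd T Ob z b y = 0")
      case True
      then have "bs (Suc t) = (\<lambda>_. 0)" unfolding bs_eq fupd_def by auto
      then show ?thesis by auto
    next
      case False
      then have Rpos: "Rupd T Ob z b y > 0" using R_nn[OF bnn, of y] by linarith
      have nn: "\<forall>h. 0 \<le> bs (Suc t) h"
        unfolding bs_eq fupd_def using S_nn[OF bnn] Rpos by auto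
      have bnz: "b \<noteq> (\<lambda>_. 0)"
      proof
        assume "b = (\<lambda>_. 0)"
        then have "Rupd T Ob z b y = 0" unfolding Rupd_def Supd_def by simp
        with False show False by simp
      qed
      hence Bb: "B z (real t) b \<le> B z 0 p0" using IH b_def by auto
      obtain q where q: "sos q" and qx: "\<forall>x. Rupd T Ob z (\<lambda>h. x (Some h)) y \<noteq> 0 \<longrightarrow>
             q x = - ((Rupd T Ob z (\<lambda>h. x (Some h)) y) ^ d *
                   (B z (x None) (fupd T Ob z (\<lambda>h. x (Some h)) y)
                    - B z (x None - 1) (\<lambda>h. x (Some h))))"
        using spec[OF bspec[OF spec[OF cond_iii, of z], of "Suc t"], of y] Suc.prems by auto
      define x where "x = (\<lambda>oo. case oo of None \<Rightarrow> real (Suc t) | Some h \<Rightarrow> b h)"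
      have xs: "(\<lambda>h. x (Some h)) = b" "x None = real (Suc t)" unfolding x_def by auto
      have "0 \<le> q x" by (rule sos_nonneg[OF q])
      also have "q x = - ((Rupd T Ob z b y) ^ d *
                   (B z (real (Suc t)) (fupd T Ob z b y) - B z (real t) b))"
        using qx[rule_format, of x] False unfolding xs by simp
      finally have "(Rupd T Ob z b y) ^ d *
                   (B z (real (Suc t)) (fupd T Ob z b y) - B z (real t) b) \<le> 0" by simp
      moreover have "(Rupd T Ob z b y) ^ d > 0" using Rpos by simp
      ultimately have "B z (real (Suc t)) (fupd T Ob z b y) - B z (real t) b \<le> 0"
        by (simp add: mult_le_0_iff)
      then show ?thesis using nn Bb bs_eq by auto
    qed
  qed
  have fs: "bs tstar \<in> simplex" "bs tstar hstar < lam" using fin unfolding Bf_def by auto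
  have "bs tstar \<noteq> (\<lambda>_. 0)" using fs(1) unfolding simplex_def by auto
  then have B1: "B z (real tstar) (bs tstar) \<le> B z 0 p0" using main[of tstar] by auto
  have "0 \<le> B z (real tstar) (bs tstar) + pf z (bs tstar) * (bs tstar hstar - lam) - s1 z"
    using sos_nonneg[OF cond_i[rule_format, of z]] by simp
  moreover have "pf z (bs tstar) * (bs tstar hstar - lam) \<le> 0"
    using sos_nonneg[OF pf_sos[rule_format, of z]] fs(2) by (simp add: mult_nonneg_nonpos)
  ultimately show False using B1 cond_ii s_pos by (smt (verit))
qed

end
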